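(* The map $\tau_{co}:\widetilde{\mathbb{K}}_{co}\to\widetilde{\mathbb{K}}$, $[(r_\varepsilon)_\varepsilon]\mapsto[(r_\varepsilon)_\varepsilon]$, is not surjective; i.e., there exists an element of $\widetilde{\mathbb{K}}$ having no representative $(r_\varepsilon)_\varepsilon$ with $\varepsilon\mapsto r_\varepsilon$ continuous on $I$.
   Context: Let $I=(0,1]$ and $\mathbb{K}\in\{\mathbb{R},\mathbb{C}\}$. Let $\mathcal{E}_M=\{(r_\varepsilon)_\varepsilon\in\mathbb{K}^I:\exists N\in\mathbb{N}: |r_\varepsilon|=O(\varepsilon^{-N})\text{ as }\varepsilon\to0\}$ and $\mathcal{N}=\{(r_\varepsilon)_\varepsilon\in\mathbb{K}^I:\forall m\in\mathbb{N}: |r_\varepsilon|=O(\varepsilon^{m})\}$, and $\widetilde{\mathbb{K}}=\mathcal{E}_M/\mathcal{N}$. Let $\mathcal{E}_{M,co}$, $\mathcal{N}_{co}$ be the subsets of $\mathcal{E}_M$, $\mathcal{N}$ consisting of nets with $\varepsilon\mapsto r_\varepsilon$ continuous on $I$, and $\widetilde{\mathbb{K}}_{co}=\mathcal{E}_{M,co}/\mathcal{N}_{co}$. The map $\tau_{co}$ is a well-defined injective unital ring homomorphism. *)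

theory Defs
  imports "HOL-Analysis.Analysis"
begin

text \<open>Nets indexed by I = (0,1] are modelled as functions real => 'a; only their
values on I matter for all notions below.\<close>

definition Iset :: "real set" where
  "Iset = {0<..1}"

definition moderate :: "(real \<Rightarrow> 'a::real_normed_vector) \<Rightarrow> bool" where
  "moderate r \<longleftrightarrow> (\<exists>N::nat. \<exists>C \<eta>. \<eta> > 0 \<and>
      (\<forall>\<epsilon>. 0 < \<epsilon> \<and> \<epsilon> \<le> 1 \<and> \<epsilon> < \<eta> \<longrightarrow> norm (r \<epsilon>) \<le> C * inverse (\<epsilon> ^ N)))"

definition negligible :: "(real \<Rightarrow> 'a::real_normed_vector) \<Rightarrow> bool" where
  "negligible r \<longleftrightarrow> (\<forall>m::nat. \<exists>C \<eta>. \<eta> > 0 \<and>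
      (\<forall>\<epsilon>. 0 < \<epsilon> \<and> \<epsilon> \<le> 1 \<and> \<epsilon> < \<eta> \<longrightarrow> norm (r \<epsilon>) \<le> C * \<epsilon> ^ m))"

definition tau_co_not_surj :: "'a::real_normed_vector itself \<Rightarrow> bool" where
  "tau_co_not_surj _ \<longleftrightarrow> (\<exists>r :: real \<Rightarrow> 'a. moderate r \<and>
      \<not> (\<exists>s. moderate s \<and> continuous_on Iset s \<and> negligible (\<lambda>\<epsilon>. r \<epsilon> - s \<epsilon>)))"

end

theory Submission
  imports Defs
begin

definition fj :: "real \<Rightarrow> real" where
  "fj e = (if even \<lfloor>1/e\<rfloor> then 1 else 0)"

lemma generic: "tau_co_not_surj TYPE('a::real_normed_algebra_1)"
proof -
  define r :: "real \<Rightarrow> 'a" where "r = (\<lambda>e. of_real (fj e))"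
  have rn: "norm (r e) \<le> 1" for e unfolding r_def fj_def by auto
  have mod: "moderate r" unfolding moderate_def
    by (rule exI[of _ 0], rule exI[of _ 1], rule exI[of _ 1]) (simp add: rn)
  have "\<not> (\<exists>s. moderate s \<and> continuous_on Iset s \<and> negligible (\<lambda>\<epsilon>. r \<epsilon> - s \<epsilon>))"
  proof
    assume "\<exists>s. moderate s \<and> continuous_on Iset s \<and> negligible (\<lambda>\<epsilon>. r \<epsilon> - s \<epsilon>)"
    then obtain s where cs: "continuous_on Iset s" and ng: "negligible (\<lambda>\<epsilon>. r \<epsilon> - s \<epsilon>)" by blast
    from ng obtain C \<eta> where eta: "\<eta> > 0" and
      bd: "\<And>e. 0 < e \<Longrightarrow> e \<le> 1 \<Longrightarrow> e < \<eta> \<Longrightarrow> norm (r e - s e) \<le> C * e ^ 1"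
      unfolding negligible_def by blast
    define k where "k = nat \<lceil>max (1/\<eta>) (4*\<bar>C\<bar>)\<rceil>"
    define n :: nat where "n = 2 * (k + 1)"
    have k1: "1/\<eta> \<le> real k" "4*\<bar>C\<bar> \<le> real k" unfolding k_def
      by (meson max.boundedE real_nat_ceiling_ge)+
    have n1: "real n > 1/\<eta>" "real n > 4*\<bar>C\<bar>" "real n \<ge> 2" using k1 unfolding n_def by auto
    define a where "a = 1 / (real n + 1)"
    define b where "b = 1 / real n"
    have ab: "0 < a" "a \<le> b" "b \<le> 1" unfolding a_def b_def using n1 by (auto simp: field_simps)
    have bet: "b < \<eta>" unfolding b_def using n1 eta by (simp add: field_simps)
    have bC: "\<bar>C\<bar> * b < 1/4" unfolding b_def using n1 by (simp add: field_simps)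
    have ev: "even n" unfolding n_def by simp
    have fa: "\<lfloor>1/a\<rfloor> = int n + 1" unfolding a_def by simp
    have fb: "\<lfloor>1/b\<rfloor> = int n" unfolding b_def using n1 by simp
    have ra: "r a = 0" unfolding r_def fj_def fa using ev by (simp del: of_nat_add)
    have rb: "r b = 1" unfolding r_def fj_def fb using ev by simp
    have close: "norm (r x - s x) < 1/4" if "a \<le> x" "x \<le> b" for x
    proof -
      have "norm (r x - s x) \<le> C * x ^ 1" using bd[of x] that ab bet by auto
      also have "\<dots> \<le> \<bar>C\<bar> * b" using that ab
        proof -
        have "C * x \<le> \<bar>C\<bar> * x" using that ab by (intro mult_right_mono) auto
        also have "\<dots> \<le> \<bar>C\<bar> * b" using that by (intro mult_left_mono) auto
        finally show ?thesis by simp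
      qed
      finally show ?thesis using bC by simp
    qed
    have sub: "{a..b} \<subseteq> Iset" unfolding Iset_def using ab by auto
    have cg: "continuous_on {a..b} (\<lambda>x. norm (s x))"
      by (intro continuous_on_norm continuous_on_subset[OF cs sub])
    have ga: "norm (s a) \<le> 1/2" using close[of a] ab ra by simp
    have gb: "1/2 \<le> norm (s b)"
    proof -
      have "norm (1 - s b) < 1/4" using close[of b] ab rb by simp
      moreover have "norm (1::'a) \<le> norm (1 - s b) + norm (s b)"
        using norm_triangle_ineq[of "1 - s b" "s b"] by simp
      ultimately show ?thesis by simp
    qed
    obtain x where x: "a \<le> x" "x \<le> b" "norm (s x) = 1/2"
      using IVT'[of "\<lambda>x. norm (s x)" a "1/2" b] ga gb ab cg by auto
    have "r x = 0 \<or> r x = 1" unfolding r_def fj_def by auto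
    moreover have "norm (r x - s x) < 1/4" using close x by auto
    moreover have "norm (1::'a) \<le> norm (1 - s x) + norm (s x)"
      using norm_triangle_ineq[of "1 - s x" "s x"] by simp
    ultimately show False using x(3) by auto
  qed
  with mod show ?thesis unfolding tau_co_not_surj_def by blast
qed

theorem lemma3p4:
  shows "tau_co_not_surj TYPE(real) \<and> tau_co_not_surj TYPE(complex)"
  using generic[where 'a=real] generic[where 'a=complex] by blast

end
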